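(* Let $G$ be a finite graph with $\nabla(G) = k$. Then $\kappa(G)\leq k+1$.
   Context: For a graph $G$, a set $S\subseteq V(G)$ is a decycling set of $G$ if $G - S$ is acyclic (a forest). The decycling number $\nabla(G)$ is the smallest size of a decycling set of $G$. $\kappa(G)$ denotes the (vertex) connectivity of $G$. *)

theory Defs
  imports Main
begin

definition sgraph :: "'a set \<Rightarrow> ('a \<Rightarrow> 'a \<Rightarrow> bool) \<Rightarrow> bool" where
  "sgraph V E \<longleftrightarrow> finite V \<and> (\<forall>x y. E x y \<longrightarrow> x \<in> V \<and> y \<in> V)
     \<and> (\<forall>x y. E x y \<longrightarrow> E y x) \<and> (\<forall>x. \<not> E x x)"

definition walk_in :: "'a set \<Rightarrow> ('a \<Rightarrow> 'a \<Rightarrow> bool) \<Rightarrow> 'a list \<Rightarrow> bool" where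
  "walk_in W E xs \<longleftrightarrow> xs \<noteq> [] \<and> set xs \<subseteq> W
     \<and> (\<forall>i. Suc i < length xs \<longrightarrow> E (xs ! i) (xs ! Suc i))"

definition connected_on :: "'a set \<Rightarrow> ('a \<Rightarrow> 'a \<Rightarrow> bool) \<Rightarrow> bool" where
  "connected_on W E \<longleftrightarrow> (\<forall>x\<in>W. \<forall>y\<in>W. \<exists>xs. walk_in W E xs \<and> hd xs = x \<and> last xs = y)"

definition has_cycle :: "'a set \<Rightarrow> ('a \<Rightarrow> 'a \<Rightarrow> bool) \<Rightarrow> bool" where
  "has_cycle W E \<longleftrightarrow> (\<exists>xs. walk_in W E xs \<and> distinct xs \<and> length xs \<ge> 3 \<and> E (last xs) (hd xs))"

definition decycling_set :: "'a set \<Rightarrow> ('a \<Rightarrow> 'a \<Rightarrow> bool) \<Rightarrow> 'a set \<Rightarrow> bool" where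
  "decycling_set V E S \<longleftrightarrow> S \<subseteq> V \<and> \<not> has_cycle (V - S) E"

definition decycling_number :: "'a set \<Rightarrow> ('a \<Rightarrow> 'a \<Rightarrow> bool) \<Rightarrow> nat" where
  "decycling_number V E = Min {card S | S. decycling_set V E S}"

definition connectivity :: "'a set \<Rightarrow> ('a \<Rightarrow> 'a \<Rightarrow> bool) \<Rightarrow> nat" where
  "connectivity V E = Min {card S | S. S \<subseteq> V \<and> (\<not> connected_on (V - S) E \<or> card (V - S) \<le> 1)}"

end

theory Submission
  imports Defs
begin

lemma leaf_exists:
  assumes fin: "finite F" and sym: "\<forall>x y. E x y \<longrightarrow> E y x" and irr: "\<forall>x. \<not> E x x"
    and nc: "\<not> has_cycle F E" and x0: "x0 \<in> F"
  shows "\<exists>x\<in>F. \<forall>u\<in>F. \<forall>w\<in>F. E x u \<and> E x w \<longrightarrow> u = w"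
proof -
  define P where "P = {xs. walk_in F E xs \<and> distinct xs}"
  have "P \<subseteq> {xs. set xs \<subseteq> F \<and> length xs \<le> card F}"
    unfolding P_def walk_in_def using fin
    by (auto simp: distinct_card[symmetric] intro: card_mono)
  then have finP: "finite P" using finite_lists_length_le[OF fin] by (rule finite_subset)
  have "[x0] \<in> P" using x0 unfolding P_def walk_in_def by auto
  define m where "m = Max (length ` P)"
  have "m \<in> length ` P" unfolding m_def using finP \<open>[x0] \<in> P\<close> by (intro Max_in) auto
  then obtain xs where xsP: "xs \<in> P" and lm: "length xs = m" by auto
  have maxl: "length ys \<le> m" if "ys \<in> P" for ys
    unfolding m_def using finP that by (intro Max_ge) auto
  have w: "walk_in F E xs" and d: "distinct xs" using xsP unfolding P_def by auto
  then have ne: "xs \<noteq> []" and sF: "set xs \<subseteq> F" and st: "\<And>i. Suc i < length xs \<Longrightarrow> E (xs ! i) (xs ! Suc i)"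
    unfolding walk_in_def by auto
  define x where "x = hd xs"
  have x0': "xs ! 0 = x" unfolding x_def using ne by (simp add: hd_conv_nth)
  have key: "1 < length xs \<and> y = xs ! 1" if yF: "y \<in> F" and xy: "E x y" for y
  proof -
    have "y \<in> set xs"
    proof (rule ccontr)
      assume yn: "y \<notin> set xs"
      have "y # xs \<in> P" unfolding P_def walk_in_def
      proof (intro CollectI conjI allI impI)
        fix i assume i: "Suc i < length (y # xs)"
        show "E ((y # xs) ! i) ((y # xs) ! Suc i)"
        proof (cases i)
          case 0 then show ?thesis using sym xy x0' by auto
        next
          case (Suc j) then show ?thesis using st i by auto
        qed
      qed (use yn d yF sF in auto)
      then show False using maxl lm by fastforce
    qed
    then obtain j where j: "j < length xs" "y = xs ! j" by (auto simp: in_set_conv_nth)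
    have "j \<noteq> 0" using j x0' xy irr by (metis)
    moreover have "\<not> j \<ge> 2"
    proof
      assume j2: "j \<ge> 2"
      define ys where "ys = take (Suc j) xs"
      have "walk_in F E ys \<and> distinct ys \<and> length ys \<ge> 3 \<and> E (last ys) (hd ys)"
      proof (intro conjI)
        show "walk_in F E ys" unfolding walk_in_def ys_def
          using ne sF st j(1) by (auto dest: in_set_takeD)
        show "distinct ys" unfolding ys_def using d by simp
        show "length ys \<ge> 3" unfolding ys_def using j j2 by simp
        have "last ys = y" unfolding ys_def using j ne by (simp add: last_conv_nth min_def) (metis Suc_leI Suc_pred diff_Suc_1 le_antisym length_greater_0_conv)
        moreover have "hd ys = x" unfolding ys_def x_def using ne by simp
        ultimately show "E (last ys) (hd ys)" using sym xy by auto
      qed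
      then show False using nc unfolding has_cycle_def by blast
    qed
    ultimately have "j = 1" by simp
    then show ?thesis using j by auto
  qed
  have "x \<in> F" using sF ne unfolding x_def by auto
  then show ?thesis using key by metis
qed

theorem mainTheorem2:
  fixes V :: "'a set" and E :: "'a \<Rightarrow> 'a \<Rightarrow> bool" and k :: nat
  assumes "sgraph V E"
    and "decycling_number V E = k"
  shows "connectivity V E \<le> k + 1"
proof -
  have fin: "finite V" and sym: "\<forall>x y. E x y \<longrightarrow> E y x" and irr: "\<forall>x. \<not> E x x"
    using assms(1) unfolding sgraph_def by auto
  have "{card S | S. decycling_set V E S} \<subseteq> card ` Pow V"
    unfolding decycling_set_def by auto
  then have f1: "finite {card S | S. decycling_set V E S}" using fin by (meson finite_Pow_iff finite_imageI finite_subset)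
  have "decycling_set V E V" unfolding decycling_set_def has_cycle_def walk_in_def by auto
  then have "k \<in> {card S | S. decycling_set V E S}" using assms(2) f1 unfolding decycling_number_def
    by (metis (mono_tags, lifting) Min_in empty_iff mem_Collect_eq)
  then obtain S where S: "decycling_set V E S" "card S = k" by auto
  have SV: "S \<subseteq> V" and nc: "\<not> has_cycle (V - S) E" using S unfolding decycling_set_def by auto
  have f2: "finite {card S | S. S \<subseteq> V \<and> (\<not> connected_on (V - S) E \<or> card (V - S) \<le> 1)}"
  proof -
    have "{card S | S. S \<subseteq> V \<and> (\<not> connected_on (V - S) E \<or> card (V - S) \<le> 1)} \<subseteq> card ` Pow V" by auto
    then show ?thesis using fin by (meson finite_Pow_iff finite_imageI finite_subset)
  qed
  have goal: "connectivity V E \<le> k + 1" if "T \<subseteq> V" "\<not> connected_on (V - T) E \<or> card (V - T) \<le> 1" "card T \<le> k + 1" for T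
  proof -
    have "connectivity V E \<le> card T" unfolding connectivity_def using that f2 by (intro Min_le) auto
    then show ?thesis using that by simp
  qed
  show ?thesis
  proof (cases "card (V - S) \<le> 1")
    case True then show ?thesis using goal[of S] SV S by auto
  next
    case False
    then obtain x0 where x0: "x0 \<in> V - S" by (metis card.empty ex_in_conv zero_le)
    obtain x where xF: "x \<in> V - S" and lf: "\<forall>u\<in>V - S. \<forall>w\<in>V - S. E x u \<and> E x w \<longrightarrow> u = w"
      using leaf_exists[OF _ sym irr nc x0] fin by blast
    have "\<exists>u. u \<in> V \<and> u \<noteq> x \<and> (\<forall>y\<in>V - S. E x y \<longrightarrow> y = u)"
    proof (cases "\<exists>u\<in>V - S. E x u")
      case True then show ?thesis using lf irr by blast
    next
      case F2: False
      obtain y where "y \<in> V - S" "y \<noteq> x"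
        using False xF by (metis One_nat_def card_le_Suc0_iff_eq finite_Diff fin)
      then show ?thesis using F2 by blast
    qed
    then obtain u where uV: "u \<in> V" and ux: "u \<noteq> x" and nb: "\<forall>y\<in>V - S. E x y \<longrightarrow> y = u" by blast
    define T where "T = insert u S"
    have TV: "T \<subseteq> V" unfolding T_def using uV SV by auto
    have cT: "card T \<le> k + 1" unfolding T_def using S(2) SV fin
      by (metis Suc_eq_plus1 card_insert_le_m1 card_gt_0_iff diff_Suc_1 le_SucI finite_subset not_gr0 card_insert_if le_refl)
    have "\<not> connected_on (V - T) E \<or> card (V - T) \<le> 1"
    proof (cases "card (V - T) \<le> 1")
      case False
      have xT: "x \<in> V - T"
      proof -
        have "x \<noteq> u" using ux by simp
        then show ?thesis using xF unfolding T_def by auto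
      qed
      from False obtain w where wT: "w \<in> V - T" "w \<noteq> x"
        by (metis One_nat_def card_le_Suc0_iff_eq finite_Diff fin)
      have "\<not> connected_on (V - T) E"
      proof
        assume "connected_on (V - T) E"
        then obtain zs where zs: "walk_in (V - T) E zs" "hd zs = x" "last zs = w"
          using xT wT unfolding connected_on_def by blast
        have "length zs \<noteq> 1" using zs wT by (cases zs) auto
        moreover have "zs \<noteq> []" using zs unfolding walk_in_def by auto
        ultimately have l: "1 < length zs" by (cases zs) auto
        then have e: "E (zs ! 0) (zs ! 1)" and inn: "zs ! 1 \<in> V - T"
          using zs(1) unfolding walk_in_def by (auto intro: nth_mem)
        have "zs ! 0 = x" using zs(2) l by (metis hd_conv_nth length_0_conv not_less_zero)
        then have "zs ! 1 = u" using nb e inn unfolding T_def by auto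
        then show False using inn unfolding T_def by auto
      qed
      then show ?thesis by simp
    qed simp
    then show ?thesis using goal[OF TV _ cT] by simp
  qed
qed

end
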